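(* Let $n$ be a positive integer and let $\mu,\nu:\{1,\dots,n\}\to[0,\infty)$ be non-negative functions with $\|\mu\|_1\le 1$ and $\|\nu\|_1\le 1$. Let $\eta,\delta>0$. Let $X=\{f\in\mathbb{R}^n: |f(x)|\le\max\{\mu(x),\nu(x)\}\text{ for every }x\}$ and let $\|\cdot\|$ be a QAP-norm on $\mathbb{R}^n$ with respect to $X$, with associated operator $\mathcal{D}$, function $c$ and function $C$ (see context). Let $J:\mathbb{R}\to\mathbb{R}$ be $J(x)=(x+|x|)/2$, and let $$\epsilon=\frac{\delta}{2\rho'\bigl(C(1)c(\eta)^{-1},\,c(\eta)^{-1},\,\delta/4,\,J\bigr)}.$$ Suppose that $\|\mu-\nu\|\le\epsilon$. Then for every function $f$ with $0\le f\le\mu$ (pointwise) there exists a function $g$ such that $0\le g\le(1-\delta)^{-1}\nu$ (pointwise) and $\|f-g\|\le\eta$.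
   Context: Functions in $\mathbb{R}^n$ are viewed as functions on $\{1,\dots,n\}$ with inner product $\langle f,g\rangle=\frac1n\sum_x f(x)g(x)$ and $\|f\|_p=(\frac1n\sum_x|f(x)|^p)^{1/p}$, $\|f\|_\infty=\max_x|f(x)|$. For a norm $\|\cdot\|$ its dual norm is $\|\phi\|^*=\max\{\langle f,\phi\rangle:\|f\|\le1\}$. Products of functions are pointwise. QAP-norm: let $\|\cdot\|$ be a norm on $\mathbb{R}^n$ with $\|f\|_\infty\le\|f\|^*$ for all $f$, and let $X$ be a bounded subset of $\mathbb{R}^n$. Then $\|\cdot\|$ is a QAP-norm with respect to $X$ if there exist a (non-linear) map $\mathcal{D}:\mathbb{R}^n\to\mathbb{R}^n$, a strictly increasing function $c:\mathbb{R}_+\to\mathbb{R}_+$ and an increasing function $C:\mathbb{N}\to\mathbb{R}$ such that (i) $\langle f,\mathcal{D}f\rangle\le1$ for every $f\in X$; (ii) $\langle f,\mathcal{D}f\rangle\ge c(\epsilon)$ for every $f\in X$ with $\|f\|\ge\epsilon$; (iii) $\|\mathcal{D}f_1\cdots\mathcal{D}f_K\|^*\le C(K)$ for all $K$ and all $f_1,\dots,f_K\in X$. It is assumed that the functions $\mathcal{D}f$, $f\in X$, span $\mathbb{R}^n$. For a real polynomial $P(x)=a_mx^m+\dots+a_1x+a_0$ let $R'_P(x)=C(m)|a_m|x^m+\dots+C(1)|a_1|x+|a_0|$. For continuous $J:\mathbb{R}\to\mathbb{R}$ and $C_1,C_2,\delta>0$, $\rho'(C_1,C_2,\delta,J)$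 is twice the infimum of $R'_P(C_2)$ over all real polynomials $P$ with $|P(x)-J(x)|\le\delta$ for all $x\in[-C_1,C_1]$. *)

theory Defs
  imports "HOL-Analysis.Analysis" "HOL-Computational_Algebra.Polynomial"
begin

text \<open>Functions on {1,...,n} are modelled as vectors of type real^'n, with n = CARD('n).\<close>

definition ip :: "real^'n \<Rightarrow> real^'n \<Rightarrow> real" where
  "ip f g = (\<Sum>x\<in>UNIV. f $ x * g $ x) / real CARD('n)"

definition norm1 :: "real^'n \<Rightarrow> real" where
  "norm1 f = (\<Sum>x\<in>UNIV. \<bar>f $ x\<bar>) / real CARD('n)"

definition norm_inf :: "real^'n \<Rightarrow> real" where
  "norm_inf f = Max ((\<lambda>x. \<bar>f $ x\<bar>) ` UNIV)"

definition is_norm :: "(real^'n \<Rightarrow> real) \<Rightarrow> bool" where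
  "is_norm N \<longleftrightarrow> (\<forall>f. N f \<ge> 0) \<and> (\<forall>f. N f = 0 \<longleftrightarrow> f = 0)
     \<and> (\<forall>a f. N (a *\<^sub>R f) = \<bar>a\<bar> * N f) \<and> (\<forall>f g. N (f + g) \<le> N f + N g)"

definition dual_norm :: "(real^'n \<Rightarrow> real) \<Rightarrow> real^'n \<Rightarrow> real" where
  "dual_norm N \<phi> = Sup {ip f \<phi> | f. N f \<le> 1}"

definition qap_norm ::
  "(real^'n \<Rightarrow> real) \<Rightarrow> (real^'n) set \<Rightarrow> (real^'n \<Rightarrow> real^'n) \<Rightarrow> (real \<Rightarrow> real)
     \<Rightarrow> (nat \<Rightarrow> real) \<Rightarrow> bool" where
  "qap_norm N X D c C \<longleftrightarrow>
     is_norm N \<and> (\<forall>f. norm_inf f \<le> dual_norm N f) \<and> bounded X \<and>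
     (\<forall>e>0. c e > 0) \<and> strict_mono_on {0<..} c \<and> mono C \<and>
     (\<forall>f\<in>X. ip f (D f) \<le> 1) \<and>
     (\<forall>e>0. \<forall>f\<in>X. N f \<ge> e \<longrightarrow> ip f (D f) \<ge> c e) \<and>
     (\<forall>K\<ge>1. \<forall>fs. (\<forall>i<K. fs i \<in> X) \<longrightarrow>
         dual_norm N (\<chi> x. \<Prod>i<K. D (fs i) $ x) \<le> C K) \<and>
     span (D ` X) = UNIV"

definition Rprime :: "(nat \<Rightarrow> real) \<Rightarrow> real poly \<Rightarrow> real \<Rightarrow> real" where
  "Rprime C P x = (\<Sum>i\<le>degree P. (if i = 0 then 1 else C i) * \<bar>coeff P i\<bar> * x ^ i)"

definition rho' :: "(nat \<Rightarrow> real) \<Rightarrow> real \<Rightarrow> real \<Rightarrow> real \<Rightarrow> (real \<Rightarrow> real) \<Rightarrow> real" where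
  "rho' C C1 C2 \<delta> J = 2 * Inf {Rprime C P C2 | P.
       \<forall>x\<in>{-C1..C1}. \<bar>poly P x - J x\<bar> \<le> \<delta>}"

end

theory Submission
  imports Defs
begin



lemma isn_basic:
  assumes "is_norm N"
  shows "N (-f) = N f" "N 0 = 0" "N f \<ge> 0" "N (f+g) \<le> N f + N g"
    "N (a *\<^sub>R f) = \<bar>a\<bar> * N f" "N f = 0 \<longleftrightarrow> f = 0"
proof -
  show "N (a *\<^sub>R f) = \<bar>a\<bar> * N f" using assms unfolding is_norm_def by blast
  have "N ((-1) *\<^sub>R f) = \<bar>-1\<bar> * N f" using assms unfolding is_norm_def by blast
  then show "N (-f) = N f" by simp
qed (use assms in \<open>auto simp: is_norm_def\<close>)

lemma norm_sum_le:
  assumes "is_norm N" shows "N (sum g A) \<le> (\<Sum>i\<in>A. N (g i))"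
proof (induction A rule: infinite_finite_induct)
  case (infinite A) then show ?case using isn_basic(6)[OF assms, of 0] by simp
next
  case empty then show ?case using isn_basic(6)[OF assms, of 0] by simp
next
  case (insert x F)
  then show ?case using isn_basic(4)[OF assms, of "g x" "sum g F"] by simp
qed

lemma norm_upper:
  fixes N :: "real^'n \<Rightarrow> real"
  assumes "is_norm N" shows "\<exists>B. \<forall>f. N f \<le> B * norm f"
proof -
  define B where "B = (\<Sum>i\<in>UNIV. N (axis i (1::real)))"
  have "N f \<le> B * norm f" for f
  proof -
    have "N f = N (\<Sum>i\<in>UNIV. (f$i) *s axis i 1)" by (simp add: basis_expansion)
    also have "\<dots> \<le> (\<Sum>i\<in>UNIV. N ((f$i) *s axis i 1))" by (rule norm_sum_le[OF assms])
    also have "\<dots> = (\<Sum>i\<in>UNIV. \<bar>f$i\<bar> * N (axis i 1))"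
      using isn_basic(5)[OF assms] by (simp add: scalar_mult_eq_scaleR)
    also have "\<dots> \<le> (\<Sum>i\<in>UNIV. norm f * N (axis i 1))"
      by (intro sum_mono mult_right_mono component_le_norm_cart) (use isn_basic(3)[OF assms] in auto)
    also have "\<dots> = B * norm f" by (simp add: B_def sum_distrib_left mult.commute)
    finally show ?thesis .
  qed
  then show ?thesis by blast
qed

lemma norm_cont:
  fixes N :: "real^'n \<Rightarrow> real"
  assumes "is_norm N" shows "continuous_on S N"
proof -
  obtain B where B: "\<And>f. N f \<le> B * norm f" using norm_upper[OF assms] by blast
  have "\<bar>N f - N g\<bar> \<le> B * norm (f - g)" for f g
  proof -
    have "N f \<le> N g + N (f - g)" using isn_basic(4)[OF assms, of g "f-g"] by simp
    moreover have "N g \<le> N f + N (g - f)" using isn_basic(4)[OF assms, of f "g-f"] by simp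
    moreover have "N (g - f) = N (f - g)" using isn_basic(1)[OF assms, of "f-g"] by simp
    ultimately show ?thesis using B[of "f-g"] by linarith
  qed
  then have L: "\<bar>N f - N g\<bar> \<le> (\<bar>B\<bar> + 1) * norm (f - g)" for f g
  proof -
    have "B * norm (f - g) \<le> (\<bar>B\<bar> + 1) * norm (f - g)" by (intro mult_right_mono) auto
    then show ?thesis using \<open>\<And>f g. \<bar>N f - N g\<bar> \<le> B * norm (f - g)\<close>[of f g] by linarith
  qed
  have "uniformly_continuous_on S N"
    unfolding uniformly_continuous_on_def dist_norm real_norm_def
  proof (intro allI impI)
    fix e :: real assume e: "e > 0"
    have Bp: "\<bar>B\<bar> + 1 > 0" by simp
    show "\<exists>d>0. \<forall>x\<in>S. \<forall>x'\<in>S. norm (x' - x) < d \<longrightarrow> \<bar>N x' - N x\<bar> < e"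
    proof (intro exI[of _ "e / (\<bar>B\<bar> + 1)"] conjI ballI impI)
      show "e / (\<bar>B\<bar> + 1) > 0" using e Bp by simp
      fix x x' :: "real^'n" assume "x \<in> S" "x' \<in> S" "norm (x' - x) < e / (\<bar>B\<bar> + 1)"
      then have "(\<bar>B\<bar> + 1) * norm (x' - x) < e" using Bp \<open>norm (x' - x) < e / (\<bar>B\<bar> + 1)\<close> by (simp add: field_simps)
      then show "\<bar>N x' - N x\<bar> < e" using L[of x' x] by linarith
    qed
  qed
  then show ?thesis by (rule uniformly_continuous_imp_continuous)
qed

lemma norm_lower:
  fixes N :: "real^'n \<Rightarrow> real"
  assumes "is_norm N" shows "\<exists>m>0. \<forall>f. m * norm f \<le> N f"
proof -
  have "sphere (0::real^'n) 1 \<noteq> {}" by (simp add: sphere_eq_empty)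
  then obtain x0 where x0: "x0 \<in> sphere 0 1" "\<forall>y\<in>sphere 0 1. N x0 \<le> N y"
    using continuous_attains_inf[of "sphere (0::real^'n) 1" N] norm_cont[OF assms] by auto
  have "x0 \<noteq> 0" using x0 by auto
  then have m: "N x0 > 0" using isn_basic(3,6)[OF assms, of x0] by auto
  have "N x0 * norm f \<le> N f" for f
  proof (cases "f = 0")
    case True then show ?thesis using isn_basic(2)[OF assms] by simp
  next
    case False
    then have "(1/norm f) *\<^sub>R f \<in> sphere 0 1" by simp
    then have "N x0 \<le> N ((1/norm f) *\<^sub>R f)" using x0 by blast
    also have "\<dots> = N f / norm f" using isn_basic(5)[OF assms] by simp
    finally show ?thesis using False by (simp add: field_simps)
  qed
  then show ?thesis using m by blast
qed

lemma ip_inner: fixes f g :: "real^'n" shows "ip f g = inner f g / real CARD('n)"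
  by (simp add: ip_def inner_vec_def)

lemma ip_scale: fixes f g :: "real^'n" shows "ip (a *\<^sub>R f) g = a * ip f g" "ip f (a *\<^sub>R g) = a * ip f g"
  by (simp_all add: ip_inner)

lemma ip_neg: fixes f g :: "real^'n" shows "ip (-f) g = - ip f g"
  by (simp add: ip_inner)

lemma dual_bdd:
  fixes N :: "real^'n \<Rightarrow> real"
  assumes "is_norm N" shows "bdd_above {ip f w | f. N f \<le> 1}"
proof -
  obtain m where m: "m > 0" "\<And>f. m * norm f \<le> N f" using norm_lower[OF assms] by blast
  have "ip f w \<le> norm w / m" if "N f \<le> 1" for f
  proof -
    have nf: "norm f \<le> 1 / m" using m(2)[of f] that m(1) by (simp add: field_simps)
    have "ip f w \<le> \<bar>inner f w\<bar> / real CARD('n)" by (simp add: ip_inner divide_right_mono)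
    also have "\<dots> \<le> \<bar>inner f w\<bar>"
    proof -
      have "real CARD('n) \<ge> 1" by (simp add: Suc_leI)
      then show ?thesis by (simp add: divide_le_eq mult_le_cancel_left1)
    qed
    also have "\<dots> \<le> norm f * norm w" by (rule Cauchy_Schwarz_ineq2)
    also have "\<dots> \<le> (1/m) * norm w" by (intro mult_right_mono nf) auto
    finally show ?thesis by simp
  qed
  then show ?thesis unfolding bdd_above_def by blast
qed

lemma dual_ge:
  fixes N :: "real^'n \<Rightarrow> real"
  assumes "is_norm N" "N f \<le> 1" shows "ip f w \<le> dual_norm N w"
  unfolding dual_norm_def by (rule cSup_upper) (use dual_bdd[OF assms(1)] assms(2) in auto)

lemma dual_nonneg:
  fixes N :: "real^'n \<Rightarrow> real"
  assumes "is_norm N" shows "0 \<le> dual_norm N w"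
  using dual_ge[OF assms, of 0 w] isn_basic(2)[OF assms] by (simp add: ip_def)

lemma holder1:
  fixes N :: "real^'n \<Rightarrow> real"
  assumes "is_norm N" shows "ip a w \<le> N a * dual_norm N w"
proof (cases "a = 0")
  case True then show ?thesis using dual_nonneg[OF assms, of w] isn_basic(2)[OF assms] by (simp add: ip_def)
next
  case False
  then have pos: "N a > 0" using isn_basic(3,6)[OF assms, of a] by auto
  have "N ((1 / N a) *\<^sub>R a) = 1" using isn_basic(5)[OF assms, of "1 / N a" a] pos by simp
  then have "ip ((1 / N a) *\<^sub>R a) w \<le> dual_norm N w" using dual_ge[OF assms] by simp
  then show ?thesis using pos by (simp add: ip_scale field_simps)
qed

lemma holder:
  fixes N :: "real^'n \<Rightarrow> real"
  assumes "is_norm N" shows "\<bar>ip a w\<bar> \<le> N a * dual_norm N w"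
  using holder1[OF assms, of a w] holder1[OF assms, of "-a" w] isn_basic(1)[OF assms, of a]
  by (simp add: ip_neg)



lemma norm1_nonneg_eq: fixes \<mu> :: "real^'n" assumes "\<forall>x. \<mu> $ x \<ge> 0"
  shows "norm1 \<mu> = (\<Sum>x\<in>UNIV. \<mu> $ x) / real CARD('n)"
  using assms by (simp add: norm1_def)

lemma approx_ip:
  fixes \<mu> u v :: "real^'n"
  assumes "\<forall>x. \<mu> $ x \<ge> 0" "norm1 \<mu> \<le> 1" "\<forall>x. u $ x \<le> v $ x + e" "e \<ge> 0"
  shows "ip \<mu> u \<le> ip \<mu> v + e"
proof -
  have "(\<Sum>x\<in>UNIV. \<mu> $ x * u $ x) \<le> (\<Sum>x\<in>UNIV. \<mu> $ x * v $ x + e * \<mu> $ x)"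
  proof (intro sum_mono)
    fix x
    have "\<mu> $ x * u $ x \<le> \<mu> $ x * (v $ x + e)" using assms(1,3) by (intro mult_left_mono) auto
    then show "\<mu> $ x * u $ x \<le> \<mu> $ x * v $ x + e * \<mu> $ x" by (simp add: algebra_simps)
  qed
  also have "\<dots> = (\<Sum>x\<in>UNIV. \<mu> $ x * v $ x) + e * (\<Sum>x\<in>UNIV. \<mu> $ x)"
    by (simp add: sum.distrib sum_distrib_left)
  finally have "ip \<mu> u \<le> ip \<mu> v + e * norm1 \<mu>"
    by (simp add: ip_def norm1_nonneg_eq[OF assms(1)] flip: add_divide_distrib) (simp add: divide_right_mono)
  also have "\<dots> \<le> ip \<mu> v + e" using assms(2,4) by (simp add: mult_left_le)
  finally show ?thesis .
qed

lemma ip_poly: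
  fixes d \<theta> :: "real^'n"
  shows "ip d (\<chi> x. poly P (\<theta> $ x)) = (\<Sum>i\<le>degree P. coeff P i * ip d (\<chi> x. \<theta> $ x ^ i))"
  by (simp add: ip_def poly_altdef sum_distrib_left sum_divide_distrib mult.left_commute)
    (rule sum.swap)


lemma calc_bound:
  fixes \<mu> \<nu> f \<theta> :: "real^'n" and N :: "real^'n \<Rightarrow> real" and P :: "real poly"
  assumes isn: "is_norm N"
    and mu: "\<forall>x. \<mu> $ x \<ge> 0" and nu: "\<forall>x. \<nu> $ x \<ge> 0"
    and m1: "norm1 \<mu> \<le> 1" and n1: "norm1 \<nu> \<le> 1"
    and f: "\<forall>x. 0 \<le> f $ x \<and> f $ x \<le> \<mu> $ x"
    and dl: "\<delta> > 0"
    and J_def: "J = (\<lambda>x. (x + \<bar>x\<bar>) / 2)"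
    and P: "\<forall>y\<in>{-C1..C1}. \<bar>poly P y - J y\<bar> \<le> \<delta> / 4"
    and th: "\<forall>x. \<bar>\<theta> $ x\<bar> \<le> C1"
    and thk: "\<forall>k\<ge>1. \<forall>a. \<bar>ip a (\<chi> x. \<theta> $ x ^ k)\<bar> \<le> N a * (C k * r2 ^ k)"
    and Cpos: "\<forall>k\<ge>1. C k \<ge> 0" and r2: "r2 \<ge> 0"
    and ep: "0 \<le> \<epsilon>" "N (\<mu> - \<nu>) \<le> \<epsilon>"
  shows "ip f \<theta> - ip \<nu> (\<chi> x. J (\<theta> $ x)) \<le> 3 * \<delta> / 4 + \<epsilon> * Rprime C P r2"
proof -
  define J\<theta> where "J\<theta> = (\<chi> x. J (\<theta> $ x))"
  define P\<theta> where "P\<theta> = (\<chi> x. poly P (\<theta> $ x))"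
  have C1: "C1 \<ge> 0" using th abs_ge_zero order_trans by blast
  have Pin: "\<bar>poly P (\<theta> $ x) - J (\<theta> $ x)\<bar> \<le> \<delta> / 4" for x
  proof -
    have "\<theta> $ x \<in> {-C1..C1}" using th[rule_format, of x] by (simp add: abs_le_iff)
    then show ?thesis using P by blast
  qed
  have s1: "ip f \<theta> \<le> ip \<mu> J\<theta>"
    unfolding ip_def J\<theta>_def
  proof (intro divide_right_mono sum_mono)
    fix x
    have "f $ x * \<theta> $ x \<le> f $ x * J (\<theta> $ x)" using f by (intro mult_left_mono) (auto simp: J_def)
    also have "\<dots> \<le> \<mu> $ x * J (\<theta> $ x)" using f by (intro mult_right_mono) (auto simp: J_def)
    finally show "f $ x * \<theta> $ x \<le> \<mu> $ x * (\<chi> x. J (\<theta> $ x)) $ x" by simp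
  qed simp
  have Pa: "J (\<theta> $ x) \<le> poly P (\<theta> $ x) + \<delta> / 4" "poly P (\<theta> $ x) \<le> J (\<theta> $ x) + \<delta> / 4" for x
    using Pin[of x] unfolding abs_le_iff by linarith+
  have s2: "ip \<mu> J\<theta> \<le> ip \<mu> P\<theta> + \<delta> / 4"
    by (rule approx_ip[OF mu m1]) (use Pa dl in \<open>simp_all add: J\<theta>_def P\<theta>_def\<close>)
  have s3: "ip \<nu> P\<theta> \<le> ip \<nu> J\<theta> + \<delta> / 4"
    by (rule approx_ip[OF nu n1]) (use Pa dl in \<open>simp_all add: J\<theta>_def P\<theta>_def\<close>)
  have c0: "\<bar>coeff P 0\<bar> \<le> \<delta> / 4" using P[rule_format, of 0] C1 by (auto simp: poly_0_coeff_0 J_def)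
  have trm: "coeff P i * ip (\<mu> - \<nu>) (\<chi> x. \<theta> $ x ^ i)
      \<le> (if i = 0 then \<bar>coeff P 0\<bar> else 0) + \<epsilon> * ((if i = 0 then 1 else C i) * \<bar>coeff P i\<bar> * r2 ^ i)" for i
  proof (cases "i = 0")
    case True
    have "ip (\<mu> - \<nu>) (\<chi> x. \<theta> $ x ^ 0) = norm1 \<mu> - norm1 \<nu>"
      by (simp add: ip_def norm1_nonneg_eq[OF mu] norm1_nonneg_eq[OF nu] sum_subtractf diff_divide_distrib)
    moreover have "norm1 \<nu> \<ge> 0" "norm1 \<mu> \<ge> 0" by (simp_all add: norm1_def)
    ultimately have d1: "\<bar>ip (\<mu> - \<nu>) (\<chi> x. \<theta> $ x ^ 0)\<bar> \<le> 1" using m1 n1 unfolding abs_le_iff by linarith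
    have "coeff P 0 * ip (\<mu> - \<nu>) (\<chi> x. \<theta> $ x ^ 0) \<le> \<bar>coeff P 0\<bar> * \<bar>ip (\<mu> - \<nu>) (\<chi> x. \<theta> $ x ^ 0)\<bar>"
      by (metis abs_ge_self abs_mult)
    also have "\<dots> \<le> \<bar>coeff P 0\<bar> * 1" by (intro mult_left_mono d1) simp
    finally have "coeff P 0 * ip (\<mu> - \<nu>) (\<chi> x. \<theta> $ x ^ 0) \<le> \<bar>coeff P 0\<bar>" by simp
    moreover have "\<epsilon> * \<bar>coeff P 0\<bar> \<ge> 0" using ep by simp
    ultimately show ?thesis using True by simp
  next
    case False
    have "coeff P i * ip (\<mu> - \<nu>) (\<chi> x. \<theta> $ x ^ i) \<le> \<bar>coeff P i\<bar> * \<bar>ip (\<mu> - \<nu>) (\<chi> x. \<theta> $ x ^ i)\<bar>"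
      by (metis abs_ge_self abs_mult)
    also have "\<dots> \<le> \<bar>coeff P i\<bar> * (N (\<mu> - \<nu>) * (C i * r2 ^ i))"
      using thk False by (intro mult_left_mono) auto
    also have "\<dots> \<le> \<bar>coeff P i\<bar> * (\<epsilon> * (C i * r2 ^ i))"
      using Cpos False r2 ep by (intro mult_left_mono mult_right_mono) auto
    finally show ?thesis using False by (simp add: mult_ac)
  qed
  have s4: "ip \<mu> P\<theta> - ip \<nu> P\<theta> \<le> \<delta> / 4 + \<epsilon> * Rprime C P r2"
  proof -
    have "ip \<mu> P\<theta> - ip \<nu> P\<theta> = ip (\<mu> - \<nu>) P\<theta>"
      by (simp add: ip_def sum_subtractf left_diff_distrib diff_divide_distrib)
    also have "\<dots> = (\<Sum>i\<le>degree P. coeff P i * ip (\<mu> - \<nu>) (\<chi> x. \<theta> $ x ^ i))"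
      unfolding P\<theta>_def by (rule ip_poly)
    also have "\<dots> \<le> (\<Sum>i\<le>degree P. (if i = 0 then \<bar>coeff P 0\<bar> else 0)
        + \<epsilon> * ((if i = 0 then 1 else C i) * \<bar>coeff P i\<bar> * r2 ^ i))"
      by (intro sum_mono trm)
    also have "\<dots> = \<bar>coeff P 0\<bar> + \<epsilon> * Rprime C P r2"
      by (simp add: sum.distrib Rprime_def sum_distrib_left)
    finally show ?thesis using c0 by simp
  qed
  show ?thesis using s1 s2 s3 s4 unfolding J\<theta>_def by simp
qed



lemma slab_closed_convex:
  fixes a R :: "real^'n"
  shows "closed {w. \<bar>ip a (\<chi> x. w $ x * R $ x)\<bar> \<le> B}" "convex {w. \<bar>ip a (\<chi> x. w $ x * R $ x)\<bar> \<le> B}"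
proof -
  define v where "v = (\<chi> x. a $ x * R $ x / real CARD('n))"
  have eq: "ip a (\<chi> x. w $ x * R $ x) = inner v w" for w
    unfolding ip_def v_def inner_vec_def sum_divide_distrib by (intro sum.cong refl) (simp add: field_simps)
  have S: "{w. \<bar>ip a (\<chi> x. w $ x * R $ x)\<bar> \<le> B} = {w. inner v w \<le> B} \<inter> {w. inner v w \<ge> -B}"
    unfolding eq abs_le_iff by (simp add: set_eq_iff) linarith
  show "closed {w. \<bar>ip a (\<chi> x. w $ x * R $ x)\<bar> \<le> B}" unfolding S
    by (intro closed_Int closed_halfspace_le closed_halfspace_ge)
  show "convex {w. \<bar>ip a (\<chi> x. w $ x * R $ x)\<bar> \<le> B}" unfolding S
    by (intro convex_Int convex_halfspace_le convex_halfspace_ge)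
qed

lemma prod_upd:
  fixes fs :: "nat \<Rightarrow> real^'n"
  assumes "j < k"
  shows "(\<Prod>i<k. (fs(j := w)) i $ x) = w $ x * (\<Prod>i\<in>{..<k} - {j}. fs i $ x)"
proof -
  have "(\<Prod>i<k. (fs(j := w)) i $ x) = (fs(j := w)) j $ x * (\<Prod>i\<in>{..<k} - {j}. (fs(j := w)) i $ x)"
    using assms by (intro prod.remove) auto
  also have "(\<Prod>i\<in>{..<k} - {j}. (fs(j := w)) i $ x) = (\<Prod>i\<in>{..<k} - {j}. fs i $ x)"
    by (intro prod.cong) auto
  finally show ?thesis by (simp only: fun_upd_same)
qed

lemma multislot:
  fixes \<Phi> :: "(real^'n) set" and N :: "real^'n \<Rightarrow> real" and k :: nat and fs :: "nat \<Rightarrow> real^'n"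
  assumes isn: "is_norm N"
    and base: "\<And>gs::nat\<Rightarrow>real^'n. (\<forall>i<k. gs i \<in> \<Phi>) \<Longrightarrow> dual_norm N (\<chi> x. \<Prod>i<k. gs i $ x) \<le> Ck"
    and fs: "\<forall>i<k. fs i \<in> closure (convex hull (\<Phi> \<union> uminus ` \<Phi>))"
  shows "\<bar>ip a (\<chi> x. \<Prod>i<k. fs i $ x)\<bar> \<le> N a * Ck"
proof -
  define \<Psi> where "\<Psi> = closure (convex hull (\<Phi> \<union> uminus ` \<Phi>))"
  define Q where "Q = (\<lambda>fs. \<forall>a. \<bar>ip a (\<chi> x. \<Prod>i<k. fs i $ x)\<bar> \<le> N a * Ck)"
  have sub: "\<Phi> \<union> uminus ` \<Phi> \<subseteq> \<Psi>" unfolding \<Psi>_def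
    by (rule order_trans[OF hull_subset closure_subset])
  have b0: "Q fs" if "\<forall>i<k. fs i \<in> \<Phi> \<union> uminus ` \<Phi>" for fs
  proof -
    define s where "s = (\<lambda>i. if fs i \<in> \<Phi> then 1 else -1::real)"
    define gs where "gs = (\<lambda>i. if fs i \<in> \<Phi> then fs i else - fs i)"
    have gs: "\<forall>i<k. gs i \<in> \<Phi>" using that by (auto simp: gs_def)
    have fsg: "fs i = s i *\<^sub>R gs i" for i by (simp add: s_def gs_def)
    have "(\<chi> x. \<Prod>i<k. fs i $ x) = (\<Prod>i<k. s i) *\<^sub>R (\<chi> x. \<Prod>i<k. gs i $ x)"
    proof -
      have "\<And>x. (\<Prod>i<k. fs i $ x) = (\<Prod>i<k. s i) * (\<Prod>i<k. gs i $ x)"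
        unfolding fsg by (simp add: prod.distrib)
      then show ?thesis by (simp add: vec_eq_iff)
    qed
    moreover have "\<bar>\<Prod>i<k. s i\<bar> = 1" unfolding abs_prod by (rule prod.neutral) (simp add: s_def)
    ultimately have "\<bar>ip a (\<chi> x. \<Prod>i<k. fs i $ x)\<bar> = \<bar>ip a (\<chi> x. \<Prod>i<k. gs i $ x)\<bar>" for a
      by (simp add: ip_scale abs_mult)
    moreover have "\<bar>ip a (\<chi> x. \<Prod>i<k. gs i $ x)\<bar> \<le> N a * Ck" for a
      by (rule order_trans[OF holder[OF isn] mult_left_mono[OF base[OF gs] isn_basic(3)[OF isn]]])
    ultimately show ?thesis unfolding Q_def by simp
  qed
  have ind: "j \<le> k \<Longrightarrow> \<forall>fs. (\<forall>i<j. (fs::nat\<Rightarrow>real^'n) i \<in> \<Psi>) \<and> (\<forall>i. j \<le> i \<and> i < k \<longrightarrow> fs i \<in> \<Phi> \<union> uminus ` \<Phi>) \<longrightarrow> Q fs"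
    for j :: nat
  proof (induction j)
    case 0 then show ?case using b0 by auto
  next
    case (Suc j)
    show ?case
    proof (intro allI impI)
      fix fs assume h: "(\<forall>i<Suc j. fs i \<in> \<Psi>) \<and> (\<forall>i. Suc j \<le> i \<and> i < k \<longrightarrow> fs i \<in> \<Phi> \<union> uminus ` \<Phi>)"
      have jk: "j < k" using Suc.prems by simp
      define R where "R = (\<chi> x. \<Prod>i\<in>{..<k} - {j}. fs i $ x)"
      define T where "T = (\<Inter>a. {w. \<bar>ip a (\<chi> x. w $ x * R $ x)\<bar> \<le> N a * Ck})"
      have Teq: "w \<in> T \<longleftrightarrow> Q (fs(j := w))" for w
      proof -
        have "(\<chi> x. \<Prod>i<k. (fs(j := w)) i $ x) = (\<chi> x. w $ x * R $ x)"
          unfolding R_def by (simp only: prod_upd[OF jk] vec_lambda_beta)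
        then show ?thesis unfolding T_def Q_def by simp
      qed
      have cT: "closed T" "convex T" unfolding T_def
        by (rule closed_INT, auto intro: slab_closed_convex(1)) (rule convex_INT, auto intro: slab_closed_convex(2))
      have "\<Phi> \<union> uminus ` \<Phi> \<subseteq> T"
      proof
        fix w assume w: "w \<in> \<Phi> \<union> uminus ` \<Phi>"
        have h1: "\<forall>i<j. (fs(j := w)) i \<in> \<Psi>" using h by auto
        have h2: "\<forall>i. j \<le> i \<and> i < k \<longrightarrow> (fs(j := w)) i \<in> \<Phi> \<union> uminus ` \<Phi>"
        proof (intro allI impI)
          fix i assume i: "j \<le> i \<and> i < k"
          show "(fs(j := w)) i \<in> \<Phi> \<union> uminus ` \<Phi>"
          proof (cases "i = j")
            case True then show ?thesis using w by simp
          next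
            case False then have "Suc j \<le> i" using i by simp
            then show ?thesis using h i False by simp
          qed
        qed
        have "Q (fs(j := w))" using Suc.IH[OF Suc_leD[OF Suc.prems]] h1 h2 by blast
        then show "w \<in> T" using Teq by simp
      qed
      then have "convex hull (\<Phi> \<union> uminus ` \<Phi>) \<subseteq> T" using cT(2) by (simp add: hull_minimal)
      then have "\<Psi> \<subseteq> T" unfolding \<Psi>_def using cT(1) by (simp add: closure_minimal)
      then have "fs j \<in> T" using h by auto
      then show "Q fs" using Teq[of "fs j"] by simp
    qed
  qed
  show ?thesis using ind[of k] fs unfolding Q_def \<Psi>_def by auto
qed



lemma poly_exists:
  fixes J :: "real \<Rightarrow> real"
  assumes "continuous_on {-a..a} J" "e > 0"
  shows "\<exists>P::real poly. \<forall>y\<in>{-a..a}. \<bar>poly P y - J y\<bar> \<le> e"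
proof -
  obtain g where g: "real_polynomial_function g" "\<And>x. x \<in> {-a..a} \<Longrightarrow> \<bar>J x - g x\<bar> < e"
    using Stone_Weierstrass_real_polynomial_function[OF compact_Icc assms(1) assms(2)] by blast
  obtain b n where gb: "g = (\<lambda>x. \<Sum>i\<le>n. b i * x^i)" using g(1) real_polynomial_function_iff_sum by blast
  define P where "P = (\<Sum>i\<le>n. monom (b i) i)"
  have "poly P x = g x" for x by (simp add: P_def gb poly_sum poly_monom)
  then have "\<forall>y\<in>{-a..a}. \<bar>poly P y - J y\<bar> \<le> e" using g(2) by (simp add: abs_minus_commute less_imp_le)
  then show ?thesis by blast
qed

lemma box_closed_convex:
  shows "closed {w::real^'n. \<forall>x. \<bar>w $ x\<bar> \<le> B}" "convex {w::real^'n. \<forall>x. \<bar>w $ x\<bar> \<le> B}"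
proof -
  have eq: "{w::real^'n. \<forall>x. \<bar>w $ x\<bar> \<le> B} = (\<Inter>x. {w. inner (axis x 1) w \<le> B} \<inter> {w. inner (axis x 1) w \<ge> -B})"
    by (auto simp: inner_axis' abs_le_iff) (metis minus_le_iff)+
  show "closed {w::real^'n. \<forall>x. \<bar>w $ x\<bar> \<le> B}" unfolding eq
    by (rule closed_INT, auto intro!: closed_Int closed_halfspace_le closed_halfspace_ge)
  show "convex {w::real^'n. \<forall>x. \<bar>w $ x\<bar> \<le> B}" unfolding eq
    by (rule convex_INT, auto intro!: convex_Int convex_halfspace_le convex_halfspace_ge)
qed

lemma Psi_box:
  fixes \<Phi> :: "(real^'n) set"
  assumes "\<forall>\<phi>\<in>\<Phi>. \<forall>x. \<bar>\<phi> $ x\<bar> \<le> B" "\<omega> \<in> closure (convex hull (\<Phi> \<union> uminus ` \<Phi>))"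
  shows "\<bar>\<omega> $ x\<bar> \<le> B"
proof -
  have "\<Phi> \<union> uminus ` \<Phi> \<subseteq> {w::real^'n. \<forall>x. \<bar>w $ x\<bar> \<le> B}" using assms(1) by auto
  then have "convex hull (\<Phi> \<union> uminus ` \<Phi>) \<subseteq> {w::real^'n. \<forall>x. \<bar>w $ x\<bar> \<le> B}"
    by (rule hull_minimal) (rule box_closed_convex(2))
  then have "closure (convex hull (\<Phi> \<union> uminus ` \<Phi>)) \<subseteq> {w::real^'n. \<forall>x. \<bar>w $ x\<bar> \<le> B}"
    by (rule closure_minimal) (rule box_closed_convex(1))
  then show ?thesis using assms(2) by auto
qed

lemma Psi_zero:
  fixes \<Phi> :: "(real^'n) set"
  assumes "\<phi> \<in> \<Phi>"
  shows "0 \<in> closure (convex hull (\<Phi> \<union> uminus ` \<Phi>))"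
proof -
  have "\<phi> \<in> convex hull (\<Phi> \<union> uminus ` \<Phi>)" "-\<phi> \<in> convex hull (\<Phi> \<union> uminus ` \<Phi>)"
    using assms by (auto intro: hull_inc)
  then have "(1/2) *\<^sub>R \<phi> + (1/2) *\<^sub>R (-\<phi>) \<in> convex hull (\<Phi> \<union> uminus ` \<Phi>)"
    by (intro convexD[OF convex_convex_hull]) auto
  then show ?thesis using closure_subset by fastforce
qed



lemma sep_sum:
  fixes G K :: "(real^'n) set"
  assumes "compact G" "convex G" "closed K" "convex K"
    and "f \<notin> (\<Union>g\<in>G. \<Union>y\<in>K. {g + y})"
  shows "\<exists>\<psi>. \<forall>g\<in>G. \<forall>y\<in>K. ip g \<psi> + ip y \<psi> < ip f \<psi>"
proof -
  obtain a b where ab: "inner a f < b" "\<forall>x\<in>(\<Union>g\<in>G. \<Union>y\<in>K. {g + y}). inner a x > b"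
    using separating_hyperplane_closed_point[OF convex_sums[OF assms(2,4)] compact_closed_sums[OF assms(1,3)] assms(5)]
    by blast
  have "ip g (-a) + ip y (-a) < ip f (-a)" if "g \<in> G" "y \<in> K" for g y
  proof -
    have "inner a (g + y) > inner a f" using ab that by force
    then have "inner (g + y) a > inner f a" by (simp add: inner_commute)
    then have "inner (g + y) a / real CARD('n) > inner f a / real CARD('n)"
      by (simp add: divide_strict_right_mono)
    then show ?thesis by (simp add: ip_inner inner_add_left add_divide_distrib)
  qed
  then show ?thesis by blast
qed

lemma bipolar:
  fixes \<Phi> :: "(real^'n) set" and \<psi> :: "real^'n"
  assumes t: "t > 0" and r: "r > 0" and \<phi>0: "\<phi>0 \<in> \<Phi>"
    and up: "\<And>y. (\<forall>\<phi>\<in>\<Phi>. \<bar>ip y \<phi>\<bar> \<le> r) \<Longrightarrow> ip y \<psi> \<le> t"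
  shows "(r / t) *\<^sub>R \<psi> \<in> closure (convex hull (\<Phi> \<union> uminus ` \<Phi>))"
proof (rule ccontr)
  define \<Psi> where "\<Psi> = closure (convex hull (\<Phi> \<union> uminus ` \<Phi>))"
  define \<omega> where "\<omega> = (r / t) *\<^sub>R \<psi>"
  assume "\<not> ?thesis"
  then have nin: "\<omega> \<notin> \<Psi>" unfolding \<omega>_def \<Psi>_def .
  have cv: "convex \<Psi>" "closed \<Psi>" unfolding \<Psi>_def by (simp_all add: convex_closure)
  obtain a b where ab: "inner a \<omega> < b" "\<forall>x\<in>\<Psi>. inner a x > b"
    using separating_hyperplane_closed_point[OF cv nin] by blast
  have "0 \<in> \<Psi>" unfolding \<Psi>_def by (rule Psi_zero[OF \<phi>0])
  then have b: "b < 0" using ab(2) by force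
  define n where "n = real CARD('n)"
  have n: "n > 0" unfolding n_def by simp
  define y where "y = (- r * n / (- b)) *\<^sub>R a"
  have "\<bar>ip y \<phi>\<bar> \<le> r" if "\<phi> \<in> \<Phi>" for \<phi>
  proof -
    have "\<phi> \<in> \<Psi>" "-\<phi> \<in> \<Psi>" unfolding \<Psi>_def using that
      by (auto intro!: subsetD[OF closure_subset] hull_inc)
    then have "inner a \<phi> > b" "inner a (-\<phi>) > b" using ab(2) by auto
    then have ia: "\<bar>inner a \<phi>\<bar> < - b" by auto
    have "ip y \<phi> = - r * inner a \<phi> / (- b)" using n
      by (simp add: y_def ip_inner n_def[symmetric] inner_commute)
    then have "\<bar>ip y \<phi>\<bar> = r * \<bar>inner a \<phi>\<bar> / (- b)" using r b by (simp add: abs_mult abs_div)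
    also have "\<dots> \<le> r * (- b) / (- b)" using ia r b
      by (intro divide_right_mono mult_left_mono) auto
    also have "\<dots> = r" using b by simp
    finally show ?thesis .
  qed
  then have le: "ip y \<psi> \<le> t" using up by blast
  have psi: "\<psi> = (t / r) *\<^sub>R \<omega>" using t r by (simp add: \<omega>_def)
  have "ip y \<psi> = t * (- inner a \<omega>) / (- b)" using n r
    by (simp add: psi y_def ip_inner n_def[symmetric] inner_commute)
  also have "\<dots> > t * (- b) / (- b)" using ab(1) b t
    by (intro divide_strict_right_mono mult_strict_left_mono) auto
  also have "t * (- b) / (- b) = t" using b by simp
  finally show False using le by simp
qed




lemma slab2:
  fixes \<phi> :: "real^'n"
  shows "closed {y. \<bar>ip y \<phi>\<bar> \<le> r}" "convex {y. \<bar>ip y \<phi>\<bar> \<le> r}"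
proof -
  define v where "v = (1 / real CARD('n)) *\<^sub>R \<phi>"
  have eq: "ip y \<phi> = inner v y" for y by (simp add: ip_inner v_def inner_commute)
  have S: "{y. \<bar>ip y \<phi>\<bar> \<le> r} = {y. inner v y \<le> r} \<inter> {y. inner v y \<ge> -r}"
    unfolding eq abs_le_iff by (simp add: set_eq_iff) linarith
  show "closed {y. \<bar>ip y \<phi>\<bar> \<le> r}" unfolding S
    by (intro closed_Int closed_halfspace_le closed_halfspace_ge)
  show "convex {y. \<bar>ip y \<phi>\<bar> \<le> r}" unfolding S
    by (intro convex_Int convex_halfspace_le convex_halfspace_ge)
qed

lemma J_hom: "(a::real) \<ge> 0 \<Longrightarrow> (a * y + \<bar>a * y\<bar>) / 2 = a * ((y + \<bar>y\<bar>) / 2)"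
  by (simp add: abs_mult algebra_simps)

theorem theorem4p11:
  fixes \<mu> \<nu> :: "real^'n" and N :: "real^'n \<Rightarrow> real" and D :: "real^'n \<Rightarrow> real^'n"
    and c :: "real \<Rightarrow> real" and C :: "nat \<Rightarrow> real" and \<eta> \<delta> \<epsilon> :: real
    and X :: "(real^'n) set" and J :: "real \<Rightarrow> real"
  assumes "\<forall>x. \<mu> $ x \<ge> 0" and "\<forall>x. \<nu> $ x \<ge> 0"
    and "norm1 \<mu> \<le> 1" and "norm1 \<nu> \<le> 1"
    and "\<eta> > 0" and "\<delta> > 0" and "\<delta> < 1"
    and X_def: "X = {f. \<forall>x. \<bar>f $ x\<bar> \<le> max (\<mu> $ x) (\<nu> $ x)}"
    and "qap_norm N X D c C"
    and J_def: "J = (\<lambda>x. (x + \<bar>x\<bar>) / 2)"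
    and eps_def: "\<epsilon> = \<delta> / (2 * rho' C (C 1 / c \<eta>) (1 / c \<eta>) (\<delta> / 4) J)"
    and "N (\<mu> - \<nu>) \<le> \<epsilon>"
  shows "\<forall>f. (\<forall>x. 0 \<le> f $ x \<and> f $ x \<le> \<mu> $ x) \<longrightarrow>
           (\<exists>g. (\<forall>x. 0 \<le> g $ x \<and> g $ x \<le> \<nu> $ x / (1 - \<delta>)) \<and> N (f - g) \<le> \<eta>)"
proof (intro allI impI)
  fix f :: "real^'n" assume f: "\<forall>x. 0 \<le> f $ x \<and> f $ x \<le> \<mu> $ x"
  have mu: "\<forall>x. \<mu> $ x \<ge> 0" and nu: "\<forall>x. \<nu> $ x \<ge> 0" and m1: "norm1 \<mu> \<le> 1" and n1: "norm1 \<nu> \<le> 1"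
    and eta: "\<eta> > 0" and dl: "\<delta> > 0" "\<delta> < 1" and Nmn: "N (\<mu> - \<nu>) \<le> \<epsilon>"
    using assms by auto
  have q: "qap_norm N X D c C" by fact
  note qq = q[unfolded qap_norm_def]
  have isn: "is_norm N" by (rule qq[THEN conjunct1])
  have ninf: "\<forall>f. norm_inf f \<le> dual_norm N f" by (rule qq[THEN conjunct2, THEN conjunct1])
  have cpos: "\<forall>e>0. c e > 0" by (rule qq[THEN conjunct2, THEN conjunct2, THEN conjunct2, THEN conjunct1])
  have smono: "strict_mono_on {0<..} c" by (rule qq[THEN conjunct2, THEN conjunct2, THEN conjunct2, THEN conjunct2, THEN conjunct1])
  have cge: "\<forall>e>0. \<forall>f\<in>X. N f \<ge> e \<longrightarrow> ip f (D f) \<ge> c e" by (rule qq[THEN conjunct2, THEN conjunct2, THEN conjunct2, THEN conjunct2, THEN conjunct2, THEN conjunct2, THEN conjunct2, THEN conjunct1])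
  have prodC: "\<forall>K\<ge>1. \<forall>fs. (\<forall>i<K. fs i \<in> X) \<longrightarrow> dual_norm N (\<chi> x. \<Prod>i<K. D (fs i) $ x) \<le> C K"
    by (rule qq[THEN conjunct2, THEN conjunct2, THEN conjunct2, THEN conjunct2, THEN conjunct2, THEN conjunct2, THEN conjunct2, THEN conjunct2, THEN conjunct1])
  have X0: "0 \<in> X" using mu unfolding X_def by (simp add: le_max_iff_disj)
  define r where "r = c \<eta>"
  have r: "r > 0" using cpos eta by (simp add: r_def)
  define \<Phi> where "\<Phi> = D ` X"
  define \<Psi> where "\<Psi> = closure (convex hull (\<Phi> \<union> uminus ` \<Phi>))"
  have phi0: "D 0 \<in> \<Phi>" using X0 by (simp add: \<Phi>_def)
  have Cpos: "\<forall>k\<ge>1. C k \<ge> 0"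
  proof (intro allI impI)
    fix k :: nat assume "k \<ge> 1"
    then have "dual_norm N (\<chi> x. \<Prod>i<k. D ((\<lambda>_. 0) i) $ x) \<le> C k"
      by (rule prodC[rule_format]) (simp add: X0)
    then show "C k \<ge> 0" by (rule order_trans[OF dual_nonneg[OF isn]])
  qed
  have base: "dual_norm N (\<chi> x. \<Prod>i<k. gs i $ x) \<le> C k" if "k \<ge> 1" "\<forall>i<k. gs i \<in> \<Phi>" for k gs
  proof -
    define hs where "hs = (\<lambda>i. inv_into X D (gs i))"
    have hs: "\<forall>i<k. hs i \<in> X" using that(2) by (auto simp: hs_def \<Phi>_def inv_into_into)
    have eq: "(\<chi> x. \<Prod>i<k. D (hs i) $ x) = (\<chi> x. \<Prod>i<k. gs i $ x)"
      using that(2) by (auto simp: hs_def \<Phi>_def f_inv_into_f intro!: prod.cong)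
    have "dual_norm N (\<chi> x. \<Prod>i<k. D (hs i) $ x) \<le> C k" using prodC that(1) hs by simp
    then show ?thesis by (simp only: eq)
  qed
  have Phibox: "\<forall>\<phi>\<in>\<Phi>. \<forall>x. \<bar>\<phi> $ x\<bar> \<le> C 1"
  proof (intro ballI allI)
    fix \<phi> x assume ph: "\<phi> \<in> \<Phi>"
    have "\<bar>\<phi> $ x\<bar> \<le> norm_inf \<phi>" unfolding norm_inf_def by (rule Max_ge) auto
    also have "\<dots> \<le> dual_norm N \<phi>" using ninf by blast
    also have "(\<chi> x. \<Prod>i<(1::nat). (\<lambda>_. \<phi>) i $ x) = \<phi>" by (simp add: vec_eq_iff card_lessThan)
    then have "dual_norm N \<phi> \<le> C 1" using base[of 1 "\<lambda>_. \<phi>"] ph by simp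
    finally show "\<bar>\<phi> $ x\<bar> \<le> C 1" .
  qed
  have Psibox: "\<bar>\<omega> $ x\<bar> \<le> C 1" if "\<omega> \<in> \<Psi>" for \<omega> x
    using Psi_box[OF Phibox] that by (simp add: \<Psi>_def)
  have Psipow: "\<bar>ip a (\<chi> x. \<omega> $ x ^ k)\<bar> \<le> N a * C k" if "\<omega> \<in> \<Psi>" "k \<ge> 1" for \<omega> a k
  proof -
    have "\<bar>ip a (\<chi> x. \<Prod>i<k. (\<lambda>_. \<omega>) i $ x)\<bar> \<le> N a * C k"
      by (rule multislot[OF isn, of k \<Phi>]) (use base[OF that(2)] that(1) in \<open>auto simp: \<Psi>_def\<close>)
    then show ?thesis by (simp add: card_lessThan)
  qed
  define I where "I = Inf {Rprime C P (1 / r) | P. \<forall>x\<in>{-(C 1 / r)..C 1 / r}. \<bar>poly P x - J x\<bar> \<le> \<delta> / 4}"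
  have rho: "rho' C (C 1 / c \<eta>) (1 / c \<eta>) (\<delta> / 4) J = 2 * I"
    by (simp add: rho'_def I_def r_def)
  have epsI: "\<epsilon> = \<delta> / (2 * (2 * I))" by (simp only: eps_def rho)
  show "\<exists>g. (\<forall>x. 0 \<le> g $ x \<and> g $ x \<le> \<nu> $ x / (1 - \<delta>)) \<and> N (f - g) \<le> \<eta>"
  proof (cases "I > 0")
    case False
    then have "\<epsilon> \<le> 0" unfolding epsI using dl by (intro divide_nonneg_nonpos) auto
    then have "N (\<mu> - \<nu>) = 0" using Nmn isn_basic(3)[OF isn, of "\<mu> - \<nu>"] by linarith
    then have mn: "\<mu> = \<nu>" using isn_basic(6)[OF isn] by simp
    have "\<nu> $ x \<le> \<nu> $ x / (1 - \<delta>)" for x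
      using nu dl by (simp add: le_divide_eq mult_left_le)
    then have "(\<forall>x. 0 \<le> f $ x \<and> f $ x \<le> \<nu> $ x / (1 - \<delta>)) \<and> N (f - f) \<le> \<eta>"
      using f mn eta isn_basic(2)[OF isn] by (auto intro: order_trans)
    then show ?thesis by blast
  next
    case True
    have eps: "\<epsilon> = \<delta> / (4 * I)" unfolding epsI by simp
    have epos: "\<epsilon> > 0" unfolding eps using True dl by simp
    define SR where "SR = {Rprime C P (1 / r) | P. \<forall>x\<in>{-(C 1 / r)..C 1 / r}. \<bar>poly P x - J x\<bar> \<le> \<delta> / 4}"
    have contJ: "continuous_on {-(C 1 / r)..C 1 / r} J" unfolding J_def by (intro continuous_intros) auto
    obtain P0 :: "real poly" where "\<forall>y\<in>{-(C 1 / r)..C 1 / r}. \<bar>poly P0 y - J y\<bar> \<le> \<delta> / 4"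
      using poly_exists[OF contJ] dl by (meson zero_less_divide_iff zero_less_numeral)
    then have SRne: "SR \<noteq> {}" unfolding SR_def by blast
    have big: "I < (4 / \<delta> - 3) * I"
    proof -
      have "4 / \<delta> > 4" using dl by (simp add: less_divide_eq)
      then have "4 / \<delta> - 3 > 1" by simp
      then show ?thesis using True by simp
    qed
    obtain R where R: "R \<in> SR" "R < (4 / \<delta> - 3) * I"
      using cInf_lessD[OF SRne] big unfolding I_def SR_def by blast
    then obtain P :: "real poly" where P: "\<forall>x\<in>{-(C 1 / r)..C 1 / r}. \<bar>poly P x - J x\<bar> \<le> \<delta> / 4"
      and RP: "Rprime C P (1 / r) < (4 / \<delta> - 3) * I"
      unfolding SR_def by blast
    have epsR: "\<epsilon> * Rprime C P (1 / r) < 1 - 3 * \<delta> / 4"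
    proof -
      have "\<epsilon> * Rprime C P (1 / r) < \<epsilon> * ((4 / \<delta> - 3) * I)"
        using RP epos by (intro mult_strict_left_mono) auto
      also have "\<dots> = 1 - 3 * \<delta> / 4" unfolding eps using True dl by (simp add: field_simps)
      finally show ?thesis .
    qed
    define G where "G = {g::real^'n. \<forall>x. 0 \<le> g $ x \<and> g $ x \<le> \<nu> $ x}"
    define K where "K = {y::real^'n. \<forall>\<phi>\<in>\<Phi>. \<bar>ip y \<phi>\<bar> \<le> r}"
    have G0: "0 \<in> G" using nu by (simp add: G_def)
    have K0: "0 \<in> K" using r by (simp add: K_def ip_def)
    have Gbox: "G = cbox 0 \<nu>" unfolding G_def by (auto simp: mem_box_cart)
    have Gc: "compact G" "convex G" unfolding Gbox by simp_all
    have Keq: "K = (\<Inter>\<phi>\<in>\<Phi>. {y. \<bar>ip y \<phi>\<bar> \<le> r})" unfolding K_def by auto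
    have Kc: "closed K" "convex K" unfolding Keq
      by (rule closed_INT, auto intro: slab2(1)) (rule convex_INT, auto intro: slab2(2))
    have inS: "f \<in> (\<Union>g\<in>G. \<Union>y\<in>K. {g + y})"
    proof (rule ccontr)
      assume nin: "f \<notin> (\<Union>g\<in>G. \<Union>y\<in>K. {g + y})"
      obtain \<psi> where sep: "\<forall>g\<in>G. \<forall>y\<in>K. ip g \<psi> + ip y \<psi> < ip f \<psi>"
        using sep_sum[OF Gc Kc nin] by blast
      have psi0: "\<psi> \<noteq> 0"
      proof
        assume "\<psi> = 0"
        then show False using sep G0 K0 by (force simp: ip_def)
      qed
      define Jv where "Jv = (\<lambda>v::real^'n. \<chi> x. J (v $ x))"
      define gs where "gs = (\<chi> x. if \<psi> $ x > 0 then \<nu> $ x else 0)"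
      have gsG: "gs \<in> G" using nu by (simp add: G_def gs_def)
      have ipgs: "ip gs \<psi> = ip \<nu> (Jv \<psi>)"
        unfolding ip_def gs_def Jv_def J_def
        by (intro arg_cong[where f="\<lambda>s. s / real CARD('n)"] sum.cong refl) auto
      define m where "m = ip f \<psi> - ip \<nu> (Jv \<psi>)"
      have Kb: "ip y \<psi> < m" if "y \<in> K" for y
        using sep gsG that ipgs unfolding m_def by force
      define t where "t = Sup {ip y \<psi> | y. y \<in> K}"
      have bdd: "bdd_above {ip y \<psi> | y. y \<in> K}"
        unfolding bdd_above_def using Kb by (auto intro: less_imp_le)
      have tup: "ip y \<psi> \<le> t" if "y \<in> K" for y
        unfolding t_def by (rule cSup_upper) (use that bdd in auto)
      have tle: "t \<le> m"
        unfolding t_def by (rule cSup_least) (use K0 Kb in \<open>auto intro: less_imp_le\<close>)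
      have tpos: "t > 0"
      proof -
        define B where "B = (\<Sum>x\<in>UNIV. \<bar>\<psi> $ x\<bar>) * C 1"
        have C1: "C 1 \<ge> 0" using Cpos by simp
        have B0: "B \<ge> 0" unfolding B_def using C1 by (simp add: sum_nonneg)
        define s where "s = r / (B + 1)"
        have s: "s > 0" unfolding s_def using r B0 by simp
        have ipb: "\<bar>ip \<psi> \<phi>\<bar> \<le> B" if "\<phi> \<in> \<Phi>" for \<phi>
        proof -
          have "\<bar>ip \<psi> \<phi>\<bar> \<le> \<bar>\<Sum>x\<in>UNIV. \<psi> $ x * \<phi> $ x\<bar>"
            unfolding ip_def by (simp add: abs_div divide_le_eq mult_le_cancel_left1)
          also have "\<dots> \<le> (\<Sum>x\<in>UNIV. \<bar>\<psi> $ x\<bar> * \<bar>\<phi> $ x\<bar>)"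
            by (rule order_trans[OF sum_abs]) (simp add: abs_mult)
          also have "\<dots> \<le> (\<Sum>x\<in>UNIV. \<bar>\<psi> $ x\<bar> * C 1)"
            using Phibox that by (intro sum_mono mult_left_mono) auto
          also have "\<dots> = B" by (simp add: B_def sum_distrib_right)
          finally show ?thesis .
        qed
        have "s *\<^sub>R \<psi> \<in> K" unfolding K_def
        proof (intro CollectI ballI)
          fix \<phi> assume ph: "\<phi> \<in> \<Phi>"
          have "\<bar>ip (s *\<^sub>R \<psi>) \<phi>\<bar> = s * \<bar>ip \<psi> \<phi>\<bar>" using s by (simp add: ip_scale abs_mult)
          also have "\<dots> \<le> s * B" using ipb[OF ph] s by simp
          also have "\<dots> \<le> r" unfolding s_def using r B0 by (simp add: field_simps)
          finally show "\<bar>ip (s *\<^sub>R \<psi>) \<phi>\<bar> \<le> r" .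
        qed
        then have "ip (s *\<^sub>R \<psi>) \<psi> \<le> t" by (rule tup)
        moreover have "ip (s *\<^sub>R \<psi>) \<psi> > 0"
          using s psi0 by (simp add: ip_scale ip_inner)
        ultimately show ?thesis by simp
      qed
      have om: "(r / t) *\<^sub>R \<psi> \<in> \<Psi>" unfolding \<Psi>_def
        by (rule bipolar[OF tpos r phi0]) (use tup in \<open>auto simp: K_def\<close>)
      define \<omega> where "\<omega> = (r / t) *\<^sub>R \<psi>"
      have om': "\<omega> \<in> \<Psi>" using om by (simp add: \<omega>_def)
      define \<theta> where "\<theta> = (1 / r) *\<^sub>R \<omega>"
      have th\<psi>: "\<theta> = (1 / t) *\<^sub>R \<psi>" unfolding \<theta>_def \<omega>_def using r by simp
      have th: "\<forall>x. \<bar>\<theta> $ x\<bar> \<le> C 1 / r"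
      proof
        fix x
        have "\<bar>\<theta> $ x\<bar> = \<bar>\<omega> $ x\<bar> / r" unfolding \<theta>_def using r by (simp add: abs_mult)
        also have "\<dots> \<le> C 1 / r" by (rule divide_right_mono[OF Psibox[OF om'] less_imp_le[OF r]])
        finally show "\<bar>\<theta> $ x\<bar> \<le> C 1 / r" .
      qed
      have thk: "\<forall>k\<ge>1. \<forall>a. \<bar>ip a (\<chi> x. \<theta> $ x ^ k)\<bar> \<le> N a * (C k * (1 / r) ^ k)"
      proof (intro allI impI)
        fix k :: nat and a assume k: "k \<ge> 1"
        have "(\<chi> x. \<theta> $ x ^ k) = (1 / r) ^ k *\<^sub>R (\<chi> x. \<omega> $ x ^ k)"
          unfolding \<theta>_def by (simp add: vec_eq_iff power_divide)
        then have "\<bar>ip a (\<chi> x. \<theta> $ x ^ k)\<bar> = (1 / r) ^ k * \<bar>ip a (\<chi> x. \<omega> $ x ^ k)\<bar>"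
          using r by (simp add: ip_scale abs_mult)
        also have "\<dots> \<le> (1 / r) ^ k * (N a * C k)"
          using Psipow[OF om' k] r by (intro mult_left_mono) auto
        finally show "\<bar>ip a (\<chi> x. \<theta> $ x ^ k)\<bar> \<le> N a * (C k * (1 / r) ^ k)" by (simp add: mult_ac)
      qed
      have Jth: "(\<chi> x. J (\<theta> $ x)) = (1 / t) *\<^sub>R Jv \<psi>"
        unfolding th\<psi> Jv_def J_def using tpos by (simp add: vec_eq_iff J_hom) (simp add: field_simps)
      have val: "ip f \<theta> - ip \<nu> (\<chi> x. J (\<theta> $ x)) = m / t"
      proof -
        have a1: "ip f \<theta> = ip f \<psi> / t" by (simp add: th\<psi> ip_scale)
        have a2: "ip \<nu> (\<chi> x. J (\<theta> $ x)) = ip \<nu> (Jv \<psi>) / t" by (simp only: Jth ip_scale) simp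
        show ?thesis unfolding a1 a2 m_def by (simp add: diff_divide_distrib)
      qed
      have "m / t \<ge> 1" using tle tpos by simp
      moreover have "ip f \<theta> - ip \<nu> (\<chi> x. J (\<theta> $ x)) \<le> 3 * \<delta> / 4 + \<epsilon> * Rprime C P (1 / r)"
        by (rule calc_bound[OF isn mu nu m1 n1 f dl(1) J_def P th thk Cpos _ less_imp_le[OF epos] Nmn])
          (use r in simp)
      ultimately show False using val epsR by simp
    qed
    then obtain g y where g: "g \<in> G" and y: "y \<in> K" and fgy: "f = g + y" by blast
    have h: "f - g = y" using fgy by simp
    have gb: "\<forall>x. 0 \<le> g $ x \<and> g $ x \<le> \<nu> $ x / (1 - \<delta>)"
    proof
      fix x
      have "\<nu> $ x \<le> \<nu> $ x / (1 - \<delta>)" using nu dl by (simp add: le_divide_eq mult_left_le)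
      then show "0 \<le> g $ x \<and> g $ x \<le> \<nu> $ x / (1 - \<delta>)" using g by (auto simp: G_def intro: order_trans)
    qed
    have yX: "y \<in> X"
    proof -
      have "\<bar>y $ x\<bar> \<le> max (\<mu> $ x) (\<nu> $ x)" for x
      proof -
        have "y $ x = f $ x - g $ x" using h by (metis vector_minus_component)
        moreover have "0 \<le> f $ x" "f $ x \<le> \<mu> $ x" using f by auto
        moreover have "0 \<le> g $ x" "g $ x \<le> \<nu> $ x" using g by (auto simp: G_def)
        ultimately show ?thesis by (simp add: abs_le_iff le_max_iff_disj) linarith
      qed
      then show ?thesis unfolding X_def by blast
    qed
    have "N y \<le> \<eta>"
    proof (rule ccontr)
      assume "\<not> N y \<le> \<eta>"
      then have Ny: "N y > \<eta>" by simp
      then have "ip y (D y) \<ge> c (N y)" using cge yX eta by simp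
      moreover have "c \<eta> < c (N y)" using smono eta Ny by (intro strict_mono_onD[OF smono]) auto
      moreover have "\<bar>ip y (D y)\<bar> \<le> r" using y yX unfolding K_def \<Phi>_def by blast
      ultimately show False unfolding r_def by simp
    qed
    then show ?thesis using gb h by metis
  qed
qed


end
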